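(* Let $T$ be a pre-truss and $P$ a non-empty normal sub-heap of $T$. Then $P$ is a paragon if and only if, for all $a,b\in T$ and $p,e\in P$, $$[a[p,e,b],ab,e]\in P\quad\text{and}\quad[[p,e,b]a,ba,e]\in P.$$
   Context: A heap is a set with a ternary operation $[-,-,-]$ satisfying $[a_1,a_2,[a_3,a_4,a_5]]=[[a_1,a_2,a_3],a_4,a_5]$ and $[a,a,b]=b=[b,a,a]$. A normal sub-heap is a non-empty subset $S$ closed under $[-,-,-]$ with $[[a,e,s],a,e]\in S$ for all $a$ in the heap and $e,s\in S$; $a\sim_S b$ iff $[a,b,s]\in S$ for some (equivalently all) $s\in S$. A pre-truss is a heap with an associative binary operation (juxtaposition). A sub-heap $S$ of $T$ is left-closed if $[ts',ts,s]\in S$ for all $s,s'\in S$, $t\in T$, right-closed if $[s't,st,s]\in S$ for all such, and closed if both. A paragon is a non-empty normal sub-heap $P$ such that every equivalence class of $\sim_P$ is a closed sub-heap of $T$. *)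

theory Defs
  imports Main
begin

text \<open>A pre-truss is modelled on the whole of a type 'a, with heap operation br
  (the ternary bracket) and juxtaposition m.\<close>

definition heap :: "('a \<Rightarrow> 'a \<Rightarrow> 'a \<Rightarrow> 'a) \<Rightarrow> bool" where
  "heap br \<longleftrightarrow>
     (\<forall>a1 a2 a3 a4 a5. br a1 a2 (br a3 a4 a5) = br (br a1 a2 a3) a4 a5) \<and>
     (\<forall>a b. br a a b = b \<and> br b a a = b)"

definition pretruss :: "('a \<Rightarrow> 'a \<Rightarrow> 'a \<Rightarrow> 'a) \<Rightarrow> ('a \<Rightarrow> 'a \<Rightarrow> 'a) \<Rightarrow> bool" where
  "pretruss br m \<longleftrightarrow> heap br \<and> (\<forall>a b c. m (m a b) c = m a (m b c))"

definition sub_heap :: "('a \<Rightarrow> 'a \<Rightarrow> 'a \<Rightarrow> 'a) \<Rightarrow> 'a set \<Rightarrow> bool" where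
  "sub_heap br S \<longleftrightarrow> (\<forall>a\<in>S. \<forall>b\<in>S. \<forall>c\<in>S. br a b c \<in> S)"

definition normal_subheap :: "('a \<Rightarrow> 'a \<Rightarrow> 'a \<Rightarrow> 'a) \<Rightarrow> 'a set \<Rightarrow> bool" where
  "normal_subheap br S \<longleftrightarrow> S \<noteq> {} \<and> sub_heap br S \<and>
     (\<forall>a. \<forall>e\<in>S. \<forall>s\<in>S. br (br a e s) a e \<in> S)"

definition heap_sim :: "('a \<Rightarrow> 'a \<Rightarrow> 'a \<Rightarrow> 'a) \<Rightarrow> 'a set \<Rightarrow> 'a \<Rightarrow> 'a \<Rightarrow> bool" where
  "heap_sim br S a b \<longleftrightarrow> (\<exists>s\<in>S. br a b s \<in> S)"

definition left_closed :: "('a \<Rightarrow> 'a \<Rightarrow> 'a \<Rightarrow> 'a) \<Rightarrow> ('a \<Rightarrow> 'a \<Rightarrow> 'a) \<Rightarrow> 'a set \<Rightarrow> bool" where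
  "left_closed br m S \<longleftrightarrow> (\<forall>s\<in>S. \<forall>s'\<in>S. \<forall>t. br (m t s') (m t s) s \<in> S)"

definition right_closed :: "('a \<Rightarrow> 'a \<Rightarrow> 'a \<Rightarrow> 'a) \<Rightarrow> ('a \<Rightarrow> 'a \<Rightarrow> 'a) \<Rightarrow> 'a set \<Rightarrow> bool" where
  "right_closed br m S \<longleftrightarrow> (\<forall>s\<in>S. \<forall>s'\<in>S. \<forall>t. br (m s' t) (m s t) s \<in> S)"

definition closed_subheap :: "('a \<Rightarrow> 'a \<Rightarrow> 'a \<Rightarrow> 'a) \<Rightarrow> ('a \<Rightarrow> 'a \<Rightarrow> 'a) \<Rightarrow> 'a set \<Rightarrow> bool" where
  "closed_subheap br m S \<longleftrightarrow> sub_heap br S \<and> left_closed br m S \<and> right_closed br m S"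

definition paragon :: "('a \<Rightarrow> 'a \<Rightarrow> 'a \<Rightarrow> 'a) \<Rightarrow> ('a \<Rightarrow> 'a \<Rightarrow> 'a) \<Rightarrow> 'a set \<Rightarrow> bool" where
  "paragon br m P \<longleftrightarrow> normal_subheap br P \<and>
     (\<forall>a. closed_subheap br m {b. heap_sim br P a b})"

end

theory Submission
  imports Defs
begin

lemma heap_simps:
  assumes "heap br"
  shows "br (br a b c) d f = br a b (br c d f)"
    and "br a (br b c d) f = br a d (br c b f)"
    and "br a a g = g" and "br g a a = g"
    and "br a b (br b c d) = br a c d"
proof -
  have A: "\<And>a1 a2 a3 a4 a5. br a1 a2 (br a3 a4 a5) = br (br a1 a2 a3) a4 a5"
   and I: "\<And>a b. br a a b = b" and J: "\<And>a b. br b a a = b"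
    using assms unfolding heap_def by auto
  show 1: "br (br a b c) d f = br a b (br c d f)" by (simp add: A)
  show "br a a g = g" by (simp add: I)
  show "br g a a = g" by (simp add: J)
  show "br a b (br b c d) = br a c d" by (simp add: A J)
  have "br c b (br b c d) = d" by (simp add: A I J)
  hence "br (br a d c) b (br b c d) = a" by (simp add: A[symmetric] J)
  hence "br a (br b c d) f = br (br (br a d c) b (br b c d)) (br b c d) f" by simp
  also have "\<dots> = br (br a d c) b f" by (simp only: A[symmetric] I)
  also have "\<dots> = br a d (br c b f)" by (simp add: A)
  finally show "br a (br b c d) f = br a d (br c b f)" .
qed

theorem lemma3p11:
  fixes br :: "'a \<Rightarrow> 'a \<Rightarrow> 'a \<Rightarrow> 'a" and m :: "'a \<Rightarrow> 'a \<Rightarrow> 'a" and P :: "'a set"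
  assumes "pretruss br m"
    and "normal_subheap br P"
  shows "paragon br m P \<longleftrightarrow>
    (\<forall>a b. \<forall>p\<in>P. \<forall>e\<in>P.
        br (m a (br p e b)) (m a b) e \<in> P \<and> br (m (br p e b) a) (m b a) e \<in> P)"
proof -
  have hp: "heap br" using assms(1) unfolding pretruss_def by auto
  note S = heap_simps[OF hp]
  have sub: "\<And>a b c. a \<in> P \<Longrightarrow> b \<in> P \<Longrightarrow> c \<in> P \<Longrightarrow> br a b c \<in> P"
    using assms(2) unfolding normal_subheap_def sub_heap_def by auto
  have nor: "\<And>a e s. e \<in> P \<Longrightarrow> s \<in> P \<Longrightarrow> br (br a e s) a e \<in> P"
    using assms(2) unfolding normal_subheap_def by auto
  obtain e where eP: "e \<in> P" using assms(2) unfolding normal_subheap_def by auto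
  define R where "R x y \<longleftrightarrow> br x y e \<in> P" for x y
  have indep: "br x y f \<in> P \<longleftrightarrow> R x y" if "f \<in> P" for x y f
  proof
    assume "br x y f \<in> P"
    from sub[OF this that eP] show "R x y" unfolding R_def by (simp add: S)
  next
    assume "R x y"
    from sub[OF this[unfolded R_def] eP that] show "br x y f \<in> P" by (simp add: S)
  qed
  have hs: "heap_sim br P x y \<longleftrightarrow> R x y" for x y
    unfolding heap_sim_def using indep eP by auto
  have refl: "R x x" for x unfolding R_def using eP by (simp add: S)
  have sym: "R y x" if "R x y" for x y
    using sub[OF eP that[unfolded R_def] eP] unfolding R_def by (simp add: S)
  have trans: "R x z" if "R x y" "R y z" for x y z
    using sub[OF that(1)[unfolded R_def] eP that(2)[unfolded R_def]] unfolding R_def by (simp add: S)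
  have c1: "R (br x y z) (br x' y z)" if "R x x'" for x x' y z
    using that unfolding R_def by (simp add: S)
  have c3: "R (br x y z) (br x y z')" if "R z z'" for x y z z'
    using nor[OF eP that[unfolded R_def], of "br x y e"] unfolding R_def by (simp add: S)
  have c2: "R (br x y z) (br x y' z)" if "R y y'" for x y y' z
    using nor[OF eP sym[OF that, unfolded R_def], of "br x y e"] unfolding R_def by (simp add: S)
  have cong: "R (br x y z) (br x' y' z')" if "R x x'" "R y y'" "R z z'" for x y z x' y' z'
    by (meson c1 c2 c3 that trans)
  show ?thesis
  proof
    assume par: "paragon br m P"
    show "\<forall>a b. \<forall>p\<in>P. \<forall>f\<in>P.
        br (m a (br p f b)) (m a b) f \<in> P \<and> br (m (br p f b) a) (m b a) f \<in> P"
    proof (intro allI ballI)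
      fix a b p f assume pP: "p \<in> P" and fP: "f \<in> P"
      have cl: "closed_subheap br m {y. R b y}"
        using par unfolding paragon_def hs by auto
      have bm: "b \<in> {y. R b y}" using refl by auto
      have xm: "br p f b \<in> {y. R b y}"
        using sub[OF fP pP eP] by (simp add: S R_def)
      have L: "R b (br (m a (br p f b)) (m a b) b)"
        using cl bm xm unfolding closed_subheap_def left_closed_def by auto
      have Rr: "R b (br (m (br p f b) a) (m b a) b)"
        using cl bm xm unfolding closed_subheap_def right_closed_def by auto
      have L2: "R (m a b) (m a (br p f b))" using L unfolding R_def by (simp add: S)
      have R2: "R (m b a) (m (br p f b) a)" using Rr unfolding R_def by (simp add: S)
      show "br (m a (br p f b)) (m a b) f \<in> P \<and> br (m (br p f b) a) (m b a) f \<in> P"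
        using sym[OF L2] sym[OF R2] indep[OF fP] by auto
    qed
  next
    assume H: "\<forall>a b. \<forall>p\<in>P. \<forall>f\<in>P.
        br (m a (br p f b)) (m a b) f \<in> P \<and> br (m (br p f b) a) (m b a) f \<in> P"
    have key: "R (m t s) (m t s') \<and> R (m s t) (m s' t)" if "R s' s" for s s' t
    proof -
      have pP: "br s' s e \<in> P" using that unfolding R_def .
      have eq: "br (br s' s e) e s = s'" by (simp add: S)
      from H pP eP have "br (m t (br (br s' s e) e s)) (m t s) e \<in> P \<and>
          br (m (br (br s' s e) e s) t) (m s t) e \<in> P" by blast
      hence "R (m t s') (m t s) \<and> R (m s' t) (m s t)" unfolding eq R_def .
      thus ?thesis using sym by blast
    qed
    show "paragon br m P"
      unfolding paragon_def closed_subheap_def sub_heap_def left_closed_def right_closed_def hs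
    proof (intro conjI allI ballI assms(2))
      fix a x y z assume "x \<in> {b. R a b}" "y \<in> {b. R a b}" "z \<in> {b. R a b}"
      hence "R (br a a a) (br x y z)" using cong by auto
      thus "br x y z \<in> {b. R a b}" by (simp add: S)
    next
      fix a s s' t assume s: "s \<in> {b. R a b}" and s': "s' \<in> {b. R a b}"
      have ss: "R s' s" using s s' sym trans by blast
      have "R s (br (m t s') (m t s) s)"
        using key[OF ss] sym unfolding R_def by (simp add: S)
      thus "br (m t s') (m t s) s \<in> {b. R a b}" using s trans by blast
    next
      fix a s s' t assume s: "s \<in> {b. R a b}" and s': "s' \<in> {b. R a b}"
      have ss: "R s' s" using s s' sym trans by blast
      have "R s (br (m s' t) (m s t) s)"
        using key[OF ss] sym unfolding R_def by (simp add: S)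
      thus "br (m s' t) (m s t) s \<in> {b. R a b}" using s trans by blast
    qed
  qed
qed

end
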